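(* Let $(\Omega,\mathcal{F},\mu_1)$ be a finite measure space and let $\{e_n\}_{n=0}^{\infty}$ be as in the context, with a fixed exponent $\nu>2$ and a nondecreasing sequence $(M_n)$ such that $\|e_n\|_{L_\nu(\Omega,\mu_1)}\le M_n$ for all $n$. Let $2\le p<\infty$, let $A$ be a bounded linear operator on $L_p(\Omega,\mu_1)$, and put $A_{mn}:=(e_m,Ae_n)_{\mu_1}$. Let $\beta,\lambda\in[0,\infty)$ and let $\psi\in L_p(\Omega,\mu_1)$ with coefficients $\psi_n=(\psi,e_n)_{\mu_1}$. Assume that for every $m$ the series $\sum_{n=0}^\infty \psi_n A_{mn}$ converges and $$\Big|\sum_{n=0}^{\infty}\psi_n A_{mn}\Big|\sim m^{-\lambda},\qquad M_m\sim m^{\beta}\qquad (m\to\infty).$$ Put $f:=A\psi$. Then $f_m:=(f,e_m)_{\mu_1}=\sum_{n=0}^\infty\psi_nA_{mn}$ for all $m$, and: (i) if $0\le\lambda\le 1/2$, then $f\in L_p(\Omega,\mu_1)$; (ii) if $1/2<\lambda<\dfrac{\nu(\beta+1)-1}{\nu-2}$, then $f\in L_q(\Omega,\mu_1)$ for every $q$ with $2\le q<\nu$ and $$q<\frac{\nu(2\beta+1)}{\nu(\beta+1-\lambda)+2\lambda-1};$$ (iii) if $\lambda\ge\dfrac{\nu(\beta+1)-1}{\nu-2}$, then $f\in L_q(\Omega,\mu_1)$ for every $q$ with $2\le q<\nu$. Moreover, in each case $f$ is represented by the series $$f=\sum_{m=0}^{\infty}e_m\sum_{n=0}^{\infty}\psi_nA_{mn},$$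 convergent in $L_q(\Omega,\mu_1)$ for the corresponding admissible $q$ (with $q=p$ in case (i)).
   Context: All functions are real-valued. $(\Omega,\mathcal{F},\mu_1)$ is a finite measure space, $1<p<\infty$, $1/p+1/p'=1$, and $(u,v)_{\mu_1}:=\int_\Omega uv\,d\mu_1$. The system $\{e_n\}_{n\ge0}$ is a Schauder basis of $L_p(\Omega,\mu_1)$ and of $L_{p'}(\Omega,\mu_1)$ whose coefficient functionals are $u\mapsto (u,e_n)_{\mu_1}$, i.e. every $u\in L_p(\Omega,\mu_1)$ satisfies $u=\sum_n (u,e_n)_{\mu_1}e_n$ in $L_p(\Omega,\mu_1)$, with partial sums $S_ku=\sum_{n=0}^k(u,e_n)_{\mu_1}e_n$. Moreover $e_n\in L_\nu(\Omega,\mu_1)$ for a fixed $\nu>2$, with $\|e_n\|_{L_\nu(\Omega,\mu_1)}\le M_n$ and $M_n\le M_{n+1}$ for all $n$. For positive sequences, $a_m\sim b_m$ ($m\to\infty$) means there are constants $0<c\le C$ with $c\,b_m\le a_m\le C\,b_m$ for all sufficiently large $m$. *)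

theory Defs
  imports "HOL-Analysis.Analysis"
begin

definition memLp :: "real \<Rightarrow> 'a measure \<Rightarrow> ('a \<Rightarrow> real) \<Rightarrow> bool" where
  "memLp r M u \<longleftrightarrow> u \<in> borel_measurable M \<and> integrable M (\<lambda>x. \<bar>u x\<bar> powr r)"

definition Lp_norm :: "real \<Rightarrow> 'a measure \<Rightarrow> ('a \<Rightarrow> real) \<Rightarrow> real" where
  "Lp_norm r M u = (\<integral>x. \<bar>u x\<bar> powr r \<partial>M) powr (1 / r)"

definition pair :: "'a measure \<Rightarrow> ('a \<Rightarrow> real) \<Rightarrow> ('a \<Rightarrow> real) \<Rightarrow> real" where
  "pair M u v = (\<integral>x. u x * v x \<partial>M)"

definition Lp_conv :: "real \<Rightarrow> 'a measure \<Rightarrow> (nat \<Rightarrow> 'a \<Rightarrow> real) \<Rightarrow> ('a \<Rightarrow> real) \<Rightarrow> bool" where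
  "Lp_conv r M s u \<longleftrightarrow> (\<lambda>k. Lp_norm r M (\<lambda>x. u x - s k x)) \<longlonglongrightarrow> 0"

definition schauder_basis_Lp :: "real \<Rightarrow> 'a measure \<Rightarrow> (nat \<Rightarrow> 'a \<Rightarrow> real) \<Rightarrow> bool" where
  "schauder_basis_Lp r M e \<longleftrightarrow>
     (\<forall>n. memLp r M (e n)) \<and>
     (\<forall>u. memLp r M u \<longrightarrow>
        Lp_conv r M (\<lambda>k x. \<Sum>n\<le>k. pair M u (e n) * e n x) u) \<and>
     (\<forall>u c. memLp r M u \<longrightarrow> Lp_conv r M (\<lambda>k x. \<Sum>n\<le>k. c n * e n x) u \<longrightarrow>
        (\<forall>n. c n = pair M u (e n)))"

definition bounded_linear_Lp :: "real \<Rightarrow> 'a measure \<Rightarrow> (('a \<Rightarrow> real) \<Rightarrow> ('a \<Rightarrow> real)) \<Rightarrow> bool" where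
  "bounded_linear_Lp r M A \<longleftrightarrow>
     (\<forall>u. memLp r M u \<longrightarrow> memLp r M (A u)) \<and>
     (\<forall>u v a b. memLp r M u \<longrightarrow> memLp r M v \<longrightarrow>
        (AE x in M. A (\<lambda>y. a * u y + b * v y) x = a * A u x + b * A v x)) \<and>
     (\<exists>C. \<forall>u. memLp r M u \<longrightarrow> Lp_norm r M (A u) \<le> C * Lp_norm r M u)"

text \<open>a_m \<sim> b_m as m \<rightarrow> \<infinity>: c b_m \<le> a_m \<le> C b_m for all large m, with 0 < c \<le> C.\<close>
definition asymp_equiv_seq :: "(nat \<Rightarrow> real) \<Rightarrow> (nat \<Rightarrow> real) \<Rightarrow> bool" where
  "asymp_equiv_seq a b \<longleftrightarrow> (\<exists>c C. 0 < c \<and> c \<le> C \<and>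
     (\<forall>\<^sub>F m in sequentially. c * b m \<le> a m \<and> a m \<le> C * b m))"

end

theory Submission
  imports Defs
begin

lemma amgm:
  fixes x y s :: real
  assumes "0 \<le> x" "0 \<le> y" "0 < s" "s < 1"
  shows "x powr s * y powr (1-s) \<le> s*x + (1-s)*y"
proof (cases "x = 0 \<or> y = 0")
  case True then show ?thesis using assms by auto
next
  case False then show ?thesis using Youngs_inequality_0[of s "1-s" x y] assms by auto
qed

lemma wholder:
  fixes a b :: "'a \<Rightarrow> real"
  assumes ia: "integrable M a" and ib: "integrable M b"
    and a0: "\<And>x. x \<in> space M \<Longrightarrow> 0 \<le> a x" and b0: "\<And>x. x \<in> space M \<Longrightarrow> 0 \<le> b x"
    and s: "0 < s" "s < 1"
  shows "integrable M (\<lambda>x. a x powr s * b x powr (1-s))"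
    and "(\<integral>x. a x powr s * b x powr (1-s) \<partial>M) \<le> (\<integral>x. a x \<partial>M) powr s * (\<integral>x. b x \<partial>M) powr (1-s)"
proof -
  have ma[measurable]: "a \<in> borel_measurable M" using ia by auto
  have mb[measurable]: "b \<in> borel_measurable M" using ib by auto
  show int: "integrable M (\<lambda>x. a x powr s * b x powr (1-s))"
  proof (rule Bochner_Integration.integrable_bound[where f="\<lambda>x. s * a x + (1-s) * b x"])
    show "integrable M (\<lambda>x. s * a x + (1-s) * b x)" using ia ib by auto
    show "(\<lambda>x. a x powr s * b x powr (1-s)) \<in> borel_measurable M" by measurable
    show "AE x in M. norm (a x powr s * b x powr (1-s)) \<le> norm (s * a x + (1-s) * b x)"
      using a0 b0 s amgm by (intro AE_I2) (auto simp: abs_mult)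
  qed
  define A where "A = (\<integral>x. a x \<partial>M)"
  define B where "B = (\<integral>x. b x \<partial>M)"
  have A0: "A \<ge> 0" unfolding A_def using a0 by (simp add: integral_nonneg)
  have B0: "B \<ge> 0" unfolding B_def using b0 by (simp add: integral_nonneg)
  show "(\<integral>x. a x powr s * b x powr (1-s) \<partial>M) \<le> (\<integral>x. a x \<partial>M) powr s * (\<integral>x. b x \<partial>M) powr (1-s)"
  proof (cases "A = 0 \<or> B = 0")
    case True
    then have "(AE x in M. a x = 0) \<or> (AE x in M. b x = 0)"
      using integral_nonneg_eq_0_iff_AE[OF ia] integral_nonneg_eq_0_iff_AE[OF ib] a0 b0
      unfolding A_def B_def by auto
    then have "AE x in M. a x = 0 \<or> b x = 0" by (auto elim: AE_mp)
    then have "AE x in M. a x powr s * b x powr (1-s) = 0" by eventually_elim auto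
    then have "(\<integral>x. a x powr s * b x powr (1-s) \<partial>M) = 0" by (simp add: integral_eq_zero_AE)
    then show ?thesis using A0 B0 by (simp flip: A_def B_def)
  next
    case False
    then have Ap: "A > 0" and Bp: "B > 0" using A0 B0 by auto
    have pw: "a x powr s * b x powr (1-s) \<le> A powr s * B powr (1-s) * (s * (a x / A) + (1-s) * (b x / B))"
      if "x \<in> space M" for x
    proof -
      have "(a x / A) powr s * (b x / B) powr (1-s) \<le> s * (a x / A) + (1-s) * (b x / B)"
        using amgm[of "a x / A" "b x / B" s] a0 b0 that Ap Bp s by auto
      moreover have "a x powr s * b x powr (1-s) = A powr s * B powr (1-s) * ((a x / A) powr s * (b x / B) powr (1-s))"
        using a0 b0 that Ap Bp by (simp add: powr_divide)
      ultimately show ?thesis using Ap Bp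
        by (metis mult_left_mono powr_ge_zero zero_le_mult_iff)
    qed
    have "(\<integral>x. a x powr s * b x powr (1-s) \<partial>M) \<le> (\<integral>x. A powr s * B powr (1-s) * (s * (a x / A) + (1-s) * (b x / B)) \<partial>M)"
      using pw ia ib int by (intro integral_mono) auto
    also have "\<dots> = A powr s * B powr (1-s) * (s * (A / A) + (1-s) * (B / B))"
      using ia ib by (simp add: A_def B_def)
    also have "\<dots> = A powr s * B powr (1-s)" using Ap Bp by simp
    finally show ?thesis by (simp add: A_def B_def)
  qed
qed

lemma powr_convex0:
  fixes x y t r :: real
  assumes "1 \<le> r" "0 \<le> t" "t \<le> 1" "0 \<le> x" "0 \<le> y"
  shows "((1-t)*x + t*y) powr r \<le> (1-t) * x powr r + t * y powr r"
proof -
  have tr: "c powr r \<le> c" if "0 \<le> c" "c \<le> 1" for c :: real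
  proof (cases "c = 0")
    case False
    then have "c powr r \<le> c powr 1" using that assms(1) by (intro powr_mono') auto
    then show ?thesis using that by simp
  qed simp
  show ?thesis
  proof (cases "x = 0 \<or> y = 0")
    case True
    then show ?thesis
    proof
      assume "x = 0"
      then show ?thesis using tr[of t] assms by (simp add: powr_mult mult_right_mono)
    next
      assume "y = 0"
      then show ?thesis using tr[of "1-t"] assms by (simp add: powr_mult mult_right_mono)
    qed
  next
    case False
    then have "x > 0" "y > 0" using assms by auto
    then show ?thesis using convex_onD[OF powr_convex[OF assms(1)], of t x y] assms by simp
  qed
qed

lemma Lp_norm_nonneg: "Lp_norm r M u \<ge> 0"
  unfolding Lp_norm_def by simp

lemma Lp_norm_cong_AE:
  assumes "AE x in M. u x = v x" "u \<in> borel_measurable M" "v \<in> borel_measurable M"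
  shows "Lp_norm r M u = Lp_norm r M v"
proof -
  have "(\<integral>x. \<bar>u x\<bar> powr r \<partial>M) = (\<integral>x. \<bar>v x\<bar> powr r \<partial>M)"
    using assms by (intro integral_cong_AE) auto
  then show ?thesis by (simp add: Lp_norm_def)
qed

lemma memLp_cong_AE:
  assumes "AE x in M. u x = v x" "memLp r M u" "v \<in> borel_measurable M"
  shows "memLp r M v"
proof -
  have "integrable M (\<lambda>x. \<bar>u x\<bar> powr r)" using assms unfolding memLp_def by auto
  moreover have "AE x in M. \<bar>u x\<bar> powr r = \<bar>v x\<bar> powr r" using assms(1) by auto
  ultimately have "integrable M (\<lambda>x. \<bar>v x\<bar> powr r)"
    using assms by (subst integrable_cong_AE[symmetric]) (auto simp: memLp_def)
  then show ?thesis using assms unfolding memLp_def by auto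
qed

lemma Lp_norm_zero_AE:
  assumes "memLp r M u" "r > 0" "Lp_norm r M u = 0"
  shows "AE x in M. u x = 0"
proof -
  have i: "integrable M (\<lambda>x. \<bar>u x\<bar> powr r)" using assms unfolding memLp_def by auto
  have "(\<integral>x. \<bar>u x\<bar> powr r \<partial>M) = 0" using assms(3) by (simp add: Lp_norm_def)
  then have "AE x in M. \<bar>u x\<bar> powr r = 0" using integral_nonneg_eq_0_iff_AE[OF i] by auto
  then show ?thesis by auto
qed

lemma Lp_norm_zero_fun: "Lp_norm r M (\<lambda>x. 0) = 0"
  unfolding Lp_norm_def by simp

lemma memLp_zero: "memLp r M (\<lambda>x. 0)"
  unfolding memLp_def by simp

lemma memLp_cmult:
  assumes "memLp r M u" "r > 0"
  shows "memLp r M (\<lambda>x. c * u x)" and "Lp_norm r M (\<lambda>x. c * u x) = \<bar>c\<bar> * Lp_norm r M u"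
proof -
  have e: "\<bar>c * u x\<bar> powr r = \<bar>c\<bar> powr r * \<bar>u x\<bar> powr r" for x
    by (simp add: abs_mult powr_mult)
  show "memLp r M (\<lambda>x. c * u x)" using assms unfolding memLp_def e by auto
  have "(\<integral>x. \<bar>c * u x\<bar> powr r \<partial>M) = \<bar>c\<bar> powr r * (\<integral>x. \<bar>u x\<bar> powr r \<partial>M)"
    unfolding e by simp
  then have "Lp_norm r M (\<lambda>x. c * u x) = (\<bar>c\<bar> powr r) powr (1/r) * Lp_norm r M u"
    unfolding Lp_norm_def by (simp add: powr_mult integral_nonneg)
  then show "Lp_norm r M (\<lambda>x. c * u x) = \<bar>c\<bar> * Lp_norm r M u"
    using assms by (simp add: powr_powr)
qed

lemma memLp_mono_exp:
  assumes "finite_measure M" "memLp r M u" "0 < s" "s \<le> r"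
  shows "memLp s M u"
proof -
  have m[measurable]: "u \<in> borel_measurable M" using assms unfolding memLp_def by auto
  have i: "integrable M (\<lambda>x. \<bar>u x\<bar> powr r)" using assms unfolding memLp_def by auto
  have b: "\<bar>u x\<bar> powr s \<le> 1 + \<bar>u x\<bar> powr r" for x
  proof (cases "\<bar>u x\<bar> \<le> 1")
    case True
    then have "\<bar>u x\<bar> powr s \<le> 1" using assms by (intro powr_le1) auto
    then show ?thesis by (smt (verit) powr_ge_zero)
  next
    case False
    then have "\<bar>u x\<bar> powr s \<le> \<bar>u x\<bar> powr r" using assms by (intro powr_mono) auto
    then show ?thesis by simp
  qed
  have "integrable M (\<lambda>x. \<bar>u x\<bar> powr s)"
  proof (rule Bochner_Integration.integrable_bound[where f="\<lambda>x. 1 + \<bar>u x\<bar> powr r"])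
    show "integrable M (\<lambda>x. 1 + \<bar>u x\<bar> powr r)"
      using i finite_measure.integrable_const[OF assms(1), of "1::real"] by (intro Bochner_Integration.integrable_add) auto
  qed (use b in auto)
  then show ?thesis using m unfolding memLp_def by auto
qed

lemma holder:
  assumes r: "1 < r" and u: "memLp r M u" and v: "memLp (r / (r - 1)) M v"
  shows "integrable M (\<lambda>x. u x * v x)"
    and "\<bar>\<integral>x. u x * v x \<partial>M\<bar> \<le> Lp_norm r M u * Lp_norm (r / (r - 1)) M v"
proof -
  define r' where "r' = r / (r - 1)"
  have r'1: "r' > 0" using r by (simp add: r'_def)
  have mu[measurable]: "u \<in> borel_measurable M" and mv[measurable]: "v \<in> borel_measurable M"
    using u v unfolding memLp_def by auto
  have ia: "integrable M (\<lambda>x. \<bar>u x\<bar> powr r)" and ib: "integrable M (\<lambda>x. \<bar>v x\<bar> powr r')"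
    using u v unfolding memLp_def r'_def by auto
  have s: "0 < 1/r" "1/r < 1" using r by auto
  have e1: "(\<bar>u x\<bar> powr r) powr (1/r) = \<bar>u x\<bar>" for x using r by (simp add: powr_powr)
  have e2: "(\<bar>v x\<bar> powr r') powr (1 - 1/r) = \<bar>v x\<bar>" for x
  proof -
    have "r' * (1 - 1/r) = 1" using r by (simp add: r'_def field_simps)
    then show ?thesis by (simp add: powr_powr)
  qed
  note W = wholder[OF ia ib _ _ s]
  have ip: "integrable M (\<lambda>x. \<bar>u x\<bar> * \<bar>v x\<bar>)" using W(1) unfolding e1 e2 by simp
  show "integrable M (\<lambda>x. u x * v x)"
    by (rule Bochner_Integration.integrable_bound[OF ip]) (auto simp: abs_mult)
  have "\<bar>\<integral>x. u x * v x \<partial>M\<bar> \<le> (\<integral>x. \<bar>u x\<bar> * \<bar>v x\<bar> \<partial>M)"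
    using integral_abs_bound[of M "\<lambda>x. u x * v x"] by (simp add: abs_mult)
  also have "\<dots> \<le> (\<integral>x. \<bar>u x\<bar> powr r \<partial>M) powr (1/r) * (\<integral>x. \<bar>v x\<bar> powr r' \<partial>M) powr (1 - 1/r)"
    using W(2) unfolding e1 e2 by simp
  also have "\<dots> = Lp_norm r M u * Lp_norm r' M v"
  proof -
    have "1 / r' = 1 - 1/r" using r by (simp add: r'_def field_simps)
    then show ?thesis by (simp add: Lp_norm_def)
  qed
  finally show "\<bar>\<integral>x. u x * v x \<partial>M\<bar> \<le> Lp_norm r M u * Lp_norm (r / (r - 1)) M v"
    by (simp add: r'_def)
qed

lemma Lp_norm_pow:
  assumes "memLp r M u" "r > 0"
  shows "Lp_norm r M u powr r = (\<integral>x. \<bar>u x\<bar> powr r \<partial>M)"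
  using assms by (simp add: Lp_norm_def powr_powr integral_nonneg)

lemma minkowski:
  assumes r: "1 \<le> r" and u: "memLp r M u" and v: "memLp r M v"
  shows "memLp r M (\<lambda>x. u x + v x)"
    and "Lp_norm r M (\<lambda>x. u x + v x) \<le> Lp_norm r M u + Lp_norm r M v"
proof -
  have mu[measurable]: "u \<in> borel_measurable M" and mv[measurable]: "v \<in> borel_measurable M"
    using u v unfolding memLp_def by auto
  have iu: "integrable M (\<lambda>x. \<bar>u x\<bar> powr r)" and iv: "integrable M (\<lambda>x. \<bar>v x\<bar> powr r)"
    using u v unfolding memLp_def by auto
  have pb: "\<bar>u x + v x\<bar> powr r \<le> 2 powr r * (\<bar>u x\<bar> powr r + \<bar>v x\<bar> powr r)" for x
  proof -
    have "\<bar>u x + v x\<bar> powr r \<le> (2 * max \<bar>u x\<bar> \<bar>v x\<bar>) powr r"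
      using r by (intro powr_mono2) auto
    also have "\<dots> = 2 powr r * max \<bar>u x\<bar> \<bar>v x\<bar> powr r" by (simp add: powr_mult)
    also have "\<dots> \<le> 2 powr r * (\<bar>u x\<bar> powr r + \<bar>v x\<bar> powr r)"
      by (intro mult_left_mono) (auto simp: max_def)
    finally show ?thesis .
  qed
  have "integrable M (\<lambda>x. \<bar>u x + v x\<bar> powr r)"
    by (rule Bochner_Integration.integrable_bound[where f="\<lambda>x. 2 powr r * (\<bar>u x\<bar> powr r + \<bar>v x\<bar> powr r)"])
       (use iu iv pb in auto)
  then show mem: "memLp r M (\<lambda>x. u x + v x)" unfolding memLp_def by auto
  define a where "a = Lp_norm r M u"
  define b where "b = Lp_norm r M v"
  have a0: "a \<ge> 0" and b0: "b \<ge> 0" by (auto simp: a_def b_def Lp_norm_nonneg)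
  show "Lp_norm r M (\<lambda>x. u x + v x) \<le> Lp_norm r M u + Lp_norm r M v"
  proof (cases "a = 0 \<or> b = 0")
    case True
    then show ?thesis
    proof
      assume "a = 0"
      then have "AE x in M. u x = 0" using Lp_norm_zero_AE[OF u] r by (simp add: a_def)
      then have "AE x in M. u x + v x = v x" by auto
      then have "Lp_norm r M (\<lambda>x. u x + v x) = b" unfolding b_def by (intro Lp_norm_cong_AE) auto
      then show ?thesis using \<open>a = 0\<close> by (simp add: a_def b_def)
    next
      assume "b = 0"
      then have "AE x in M. v x = 0" using Lp_norm_zero_AE[OF v] r by (simp add: b_def)
      then have "AE x in M. u x + v x = u x" by auto
      then have "Lp_norm r M (\<lambda>x. u x + v x) = a" unfolding a_def by (intro Lp_norm_cong_AE) auto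
      then show ?thesis using \<open>b = 0\<close> by (simp add: a_def b_def)
    qed
  next
    case False
    then have ap: "a > 0" and bp: "b > 0" using a0 b0 by auto
    define t where "t = b / (a + b)"
    have t: "0 \<le> t" "t \<le> 1" "1 - t = a / (a+b)" using ap bp by (auto simp: t_def field_simps)
    have pw: "\<bar>u x + v x\<bar> powr r \<le> (a+b) powr r * ((1-t) * ((\<bar>u x\<bar> powr r) / a powr r) + t * ((\<bar>v x\<bar> powr r) / b powr r))" for x
    proof -
      have eq: "\<bar>u x\<bar> + \<bar>v x\<bar> = (a+b) * ((1-t) * (\<bar>u x\<bar>/a) + t * (\<bar>v x\<bar>/b))"
      proof -
        have "(1-t) * (\<bar>u x\<bar>/a) = (a/(a+b)) * (\<bar>u x\<bar>/a)" using t(3) by simp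
        also have "\<dots> = \<bar>u x\<bar>/(a+b)" using ap bp by simp
        finally have "(1-t) * (\<bar>u x\<bar>/a) = \<bar>u x\<bar>/(a+b)" .
        moreover have "t * (\<bar>v x\<bar>/b) = \<bar>v x\<bar>/(a+b)" using ap bp unfolding t_def by simp
        ultimately show ?thesis using ap bp by (simp add: distrib_left)
      qed
      have "\<bar>u x + v x\<bar> powr r \<le> (\<bar>u x\<bar> + \<bar>v x\<bar>) powr r" using r by (intro powr_mono2) auto
      also have "\<dots> = (a+b) powr r * ((1-t) * (\<bar>u x\<bar>/a) + t * (\<bar>v x\<bar>/b)) powr r"
        unfolding eq using ap bp t by (subst powr_mult) auto
      also have "\<dots> \<le> (a+b) powr r * ((1-t) * (\<bar>u x\<bar>/a) powr r + t * (\<bar>v x\<bar>/b) powr r)"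
        using ap bp t r by (intro mult_left_mono powr_convex0) auto
      finally show ?thesis using ap bp by (simp add: powr_divide)
    qed
    have "(\<integral>x. \<bar>u x + v x\<bar> powr r \<partial>M) \<le> (\<integral>x. (a+b) powr r * ((1-t) * ((\<bar>u x\<bar> powr r) / a powr r) + t * ((\<bar>v x\<bar> powr r) / b powr r)) \<partial>M)"
      using pw iu iv mem unfolding memLp_def by (intro integral_mono) auto
    also have "\<dots> = (a+b) powr r * ((1-t) * ((\<integral>x. \<bar>u x\<bar> powr r \<partial>M) / a powr r) + t * ((\<integral>x. \<bar>v x\<bar> powr r \<partial>M) / b powr r))"
      using iu iv by simp
    also have "\<dots> = (a+b) powr r"
    proof -
      have "(\<integral>x. \<bar>u x\<bar> powr r \<partial>M) = a powr r" "(\<integral>x. \<bar>v x\<bar> powr r \<partial>M) = b powr r"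
        using Lp_norm_pow[OF u] Lp_norm_pow[OF v] r unfolding a_def b_def by auto
      then show ?thesis using ap bp t(3) by simp
    qed
    finally have "(\<integral>x. \<bar>u x + v x\<bar> powr r \<partial>M) \<le> (a+b) powr r" .
    then have "Lp_norm r M (\<lambda>x. u x + v x) \<le> ((a+b) powr r) powr (1/r)"
      unfolding Lp_norm_def using r by (intro powr_mono2) (auto simp: integral_nonneg)
    also have "\<dots> = a + b" using r ap bp by (simp add: powr_powr)
    finally show ?thesis by (simp add: a_def b_def)
  qed
qed

lemma minkowski_diff:
  assumes r: "1 \<le> r" and u: "memLp r M u" and v: "memLp r M v"
  shows "memLp r M (\<lambda>x. u x - v x)"
    and "Lp_norm r M (\<lambda>x. u x - v x) \<le> Lp_norm r M u + Lp_norm r M v"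
proof -
  have v': "memLp r M (\<lambda>x. (-1) * v x)" and n: "Lp_norm r M (\<lambda>x. (-1) * v x) = Lp_norm r M v"
    using memLp_cmult[OF v, of "-1"] r by auto
  show "memLp r M (\<lambda>x. u x - v x)" using minkowski(1)[OF r u v'] by simp
  show "Lp_norm r M (\<lambda>x. u x - v x) \<le> Lp_norm r M u + Lp_norm r M v"
    using minkowski(2)[OF r u v'] n by simp
qed

lemma memLp_sum:
  assumes r: "1 \<le> r" and "\<And>i. i \<in> I \<Longrightarrow> memLp r M (u i)"
  shows "memLp r M (\<lambda>x. \<Sum>i\<in>I. u i x)"
    and "Lp_norm r M (\<lambda>x. \<Sum>i\<in>I. u i x) \<le> (\<Sum>i\<in>I. Lp_norm r M (u i))"
proof -
  have "memLp r M (\<lambda>x. \<Sum>i\<in>I. u i x) \<and> Lp_norm r M (\<lambda>x. \<Sum>i\<in>I. u i x) \<le> (\<Sum>i\<in>I. Lp_norm r M (u i))"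
    using assms(2)
  proof (induction I rule: infinite_finite_induct)
    case (infinite A) then show ?case by (simp add: memLp_zero Lp_norm_zero_fun)
  next
    case empty then show ?case by (simp add: memLp_zero Lp_norm_zero_fun)
  next
    case (insert i F)
    then have IH: "memLp r M (\<lambda>x. \<Sum>i\<in>F. u i x)" "Lp_norm r M (\<lambda>x. \<Sum>i\<in>F. u i x) \<le> (\<Sum>i\<in>F. Lp_norm r M (u i))"
      by auto
    have ui: "memLp r M (u i)" using insert by auto
    have e: "(\<lambda>x. \<Sum>i\<in>insert i F. u i x) = (\<lambda>x. u i x + (\<Sum>i\<in>F. u i x))" using insert by auto
    show ?case unfolding e using minkowski[OF r ui IH(1)] IH(2) insert by auto
  qed
  then show "memLp r M (\<lambda>x. \<Sum>i\<in>I. u i x)"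
    and "Lp_norm r M (\<lambda>x. \<Sum>i\<in>I. u i x) \<le> (\<Sum>i\<in>I. Lp_norm r M (u i))" by auto
qed

lemma abs_powr_2: "\<bar>x::real\<bar> powr 2 = x\<^sup>2"
  by (cases "x = 0") (auto simp: powr_numeral)

lemma interp:
  assumes fin: "finite_measure M" and nu: "2 < \<nu>" and q: "2 \<le> q" "q < \<nu>"
    and g: "memLp \<nu> M g"
    and X: "(\<integral>x. \<bar>g x\<bar> powr 2 \<partial>M) \<le> X" and Y: "(\<integral>x. \<bar>g x\<bar> powr \<nu> \<partial>M) \<le> Y"
    and Xp: "0 < X" and Yp: "0 < Y"
  shows "memLp q M g" and "(\<integral>x. \<bar>g x\<bar> powr q \<partial>M) \<le> X powr ((\<nu>-q)/(\<nu>-2)) * Y powr ((q-2)/(\<nu>-2))"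
proof -
  show mq: "memLp q M g" using memLp_mono_exp[OF fin g] q by auto
  have m2: "memLp 2 M g" using memLp_mono_exp[OF fin g] nu by auto
  define s where "s = (\<nu>-q)/(\<nu>-2)"
  have s1: "1 - s = (q-2)/(\<nu>-2)" using nu by (simp add: s_def field_simps)
  show "(\<integral>x. \<bar>g x\<bar> powr q \<partial>M) \<le> X powr ((\<nu>-q)/(\<nu>-2)) * Y powr ((q-2)/(\<nu>-2))"
  proof (cases "q = 2")
    case True
    then show ?thesis using X Yp Xp nu by simp
  next
    case False
    then have s: "0 < s" "s < 1" using q nu by (auto simp: s_def field_simps)
    have ia: "integrable M (\<lambda>x. \<bar>g x\<bar> powr 2)" and ib: "integrable M (\<lambda>x. \<bar>g x\<bar> powr \<nu>)"
      using m2 g unfolding memLp_def by auto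
    have ex: "2 * s + \<nu> * (1 - s) = q"
    proof -
      have "2 * s + \<nu> * (1 - s) = (2*(\<nu>-q) + \<nu>*(q-2)) / (\<nu>-2)"
      proof -
        have "\<nu>*(1-s) = \<nu>*(q-2)/(\<nu>-2)" by (simp add: s1)
        moreover have "2 * s = 2*(\<nu>-q)/(\<nu>-2)" by (simp add: s_def)
        ultimately show ?thesis by (simp add: add_divide_distrib)
      qed
      also have "2*(\<nu>-q) + \<nu>*(q-2) = q*(\<nu>-2)" by (simp add: algebra_simps)
      finally show ?thesis using nu by simp
    qed
    have e: "(\<bar>g x\<bar> powr 2) powr s * (\<bar>g x\<bar> powr \<nu>) powr (1-s) = \<bar>g x\<bar> powr q" for x
    proof -
      have "(\<bar>g x\<bar> powr 2) powr s * (\<bar>g x\<bar> powr \<nu>) powr (1-s) = \<bar>g x\<bar> powr (2 * s) * \<bar>g x\<bar> powr (\<nu>*(1-s))"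
        by (simp only: powr_powr)
      also have "\<dots> = \<bar>g x\<bar> powr (2 * s + \<nu>*(1-s))" by (simp only: powr_add)
      finally show ?thesis by (simp only: ex)
    qed
    have "(\<integral>x. \<bar>g x\<bar> powr q \<partial>M) \<le> (\<integral>x. \<bar>g x\<bar> powr 2 \<partial>M) powr s * (\<integral>x. \<bar>g x\<bar> powr \<nu> \<partial>M) powr (1-s)"
      using wholder(2)[OF ia ib _ _ s] unfolding e by simp
    also have "\<dots> \<le> X powr s * Y powr (1-s)"
      using X Y s by (intro mult_mono powr_mono2) (auto simp: integral_nonneg)
    finally show ?thesis by (simp only: s1) (simp add: s_def)
  qed
qed

lemma ortho_sum:
  assumes fin: "finite F"
    and ie: "\<And>m n. integrable M (\<lambda>x. e m x * e n x)"
    and orth: "\<And>m n. pair M (e m) (e n) = (if m = n then 1 else 0)"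
  shows "(\<integral>x. \<bar>\<Sum>m\<in>F. c m * e m x\<bar> powr 2 \<partial>M) = (\<Sum>m\<in>F. (c m)\<^sup>2)"
proof -
  have "(\<integral>x. \<bar>\<Sum>m\<in>F. c m * e m x\<bar> powr 2 \<partial>M) = (\<integral>x. (\<Sum>m\<in>F. \<Sum>n\<in>F. c m * c n * (e m x * e n x)) \<partial>M)"
    unfolding abs_powr_2 power2_eq_square sum_product by (simp add: algebra_simps)
  also have "\<dots> = (\<Sum>m\<in>F. \<Sum>n\<in>F. c m * c n * pair M (e m) (e n))"
    using ie by (simp add: pair_def)
  also have "\<dots> = (\<Sum>m\<in>F. (c m)\<^sup>2)"
    unfolding orth using fin by (simp add: power2_eq_square if_distrib cong: if_cong)
  finally show ?thesis .
qed

lemma fatou_Lq: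
  fixes g :: "'a \<Rightarrow> real" and h :: "nat \<Rightarrow> 'a \<Rightarrow> real"
  assumes mg[measurable]: "g \<in> borel_measurable M" and mh[measurable]: "\<And>j. h j \<in> borel_measurable M"
    and conv: "AE x in M. (\<lambda>j. h j x) \<longlonglongrightarrow> g x" and q: "q > 0"
    and ih: "\<And>j. integrable M (\<lambda>x. \<bar>h j x\<bar> powr q)"
    and bnd: "\<And>j. (\<integral>x. \<bar>h j x\<bar> powr q \<partial>M) \<le> B"
  shows "integrable M (\<lambda>x. \<bar>g x\<bar> powr q)" and "(\<integral>x. \<bar>g x\<bar> powr q \<partial>M) \<le> B"
proof -
  have AEl: "AE x in M. ennreal (\<bar>g x\<bar> powr q) = liminf (\<lambda>j. ennreal (\<bar>h j x\<bar> powr q))"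
    using conv
  proof eventually_elim
    case (elim x)
    have "(\<lambda>j. \<bar>h j x\<bar> powr q) \<longlonglongrightarrow> \<bar>g x\<bar> powr q"
      using q by (intro tendsto_intros elim) auto
    then have "(\<lambda>j. ennreal (\<bar>h j x\<bar> powr q)) \<longlonglongrightarrow> ennreal (\<bar>g x\<bar> powr q)"
      by (intro tendsto_ennrealI)
    then show ?case by (intro lim_imp_Liminf[symmetric]) auto
  qed
  have "(\<integral>\<^sup>+x. ennreal (\<bar>g x\<bar> powr q) \<partial>M) = (\<integral>\<^sup>+x. liminf (\<lambda>j. ennreal (\<bar>h j x\<bar> powr q)) \<partial>M)"
    using AEl by (intro nn_integral_cong_AE) auto
  also have "\<dots> \<le> liminf (\<lambda>j. \<integral>\<^sup>+x. ennreal (\<bar>h j x\<bar> powr q) \<partial>M)"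
    by (intro nn_integral_liminf) auto
  also have "\<dots> = liminf (\<lambda>j. ennreal (\<integral>x. \<bar>h j x\<bar> powr q \<partial>M))"
    using ih by (subst nn_integral_eq_integral) auto
  also have "\<dots> \<le> ennreal B"
    using bnd by (intro Liminf_le) (auto intro!: always_eventually ennreal_leI)
  finally have le: "(\<integral>\<^sup>+x. ennreal (\<bar>g x\<bar> powr q) \<partial>M) \<le> ennreal B" .
  then show ig: "integrable M (\<lambda>x. \<bar>g x\<bar> powr q)"
    by (subst integrable_iff_bounded) (auto simp: top_unique intro: le_less_trans[OF le])
  have "ennreal (\<integral>x. \<bar>g x\<bar> powr q \<partial>M) \<le> ennreal B"
    using le ig by (subst (asm) nn_integral_eq_integral) auto
  moreover have "0 \<le> B"
  proof -
    have "0 \<le> (\<integral>x. \<bar>h 0 x\<bar> powr q \<partial>M)" by (rule Bochner_Integration.integral_nonneg) auto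
    then show ?thesis using bnd[of 0] by linarith
  qed
  ultimately show "(\<integral>x. \<bar>g x\<bar> powr q \<partial>M) \<le> B" by (simp add: ennreal_le_iff)
qed

lemma L1_bound:
  assumes fin: "finite_measure M" and r: "1 < r" and g: "memLp r M g"
  shows "integrable M g"
    and "(\<integral>x. \<bar>g x\<bar> \<partial>M) \<le> Lp_norm r M g * (measure M (space M)) powr (1 - 1/r)"
proof -
  have mg[measurable]: "g \<in> borel_measurable M" using g unfolding memLp_def by auto
  have ia: "integrable M (\<lambda>x. \<bar>g x\<bar> powr r)" using g unfolding memLp_def by auto
  have ib: "integrable M (\<lambda>x. 1::real)" using finite_measure.integrable_const[OF fin] by auto
  have s: "0 < 1/r" "1/r < 1" using r by auto
  have e: "(\<bar>g x\<bar> powr r) powr (1/r) * 1 powr (1 - 1/r) = \<bar>g x\<bar>" for x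
    using r by (simp add: powr_powr)
  note W = wholder[OF ia ib _ _ s]
  have "integrable M (\<lambda>x. \<bar>g x\<bar>)" using W(1) unfolding e by simp
  then show "integrable M g" by (simp add: integrable_abs_iff)
  have "(\<integral>x. \<bar>g x\<bar> \<partial>M) \<le> (\<integral>x. \<bar>g x\<bar> powr r \<partial>M) powr (1/r) * (\<integral>x. 1 \<partial>M) powr (1 - 1/r)"
    using W(2) unfolding e by simp
  then show "(\<integral>x. \<bar>g x\<bar> \<partial>M) \<le> Lp_norm r M g * (measure M (space M)) powr (1 - 1/r)"
    by (simp add: Lp_norm_def)
qed

lemma Lp_AE_subseq:
  assumes fin: "finite_measure M" and r: "1 < r" and sm: "\<And>k. memLp r M (s k)" and g: "memLp r M g"
    and conv: "Lp_conv r M s g"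
  shows "\<exists>\<rho>::nat\<Rightarrow>nat. strict_mono \<rho> \<and> (AE x in M. (\<lambda>j. s (\<rho> j) x) \<longlonglongrightarrow> g x)"
proof -
  define C where "C = (measure M (space M)) powr (1 - 1/r)"
  have d: "memLp r M (\<lambda>x. g x - s k x)" for k using minkowski_diff(1)[OF _ g sm] r by auto
  have iu: "integrable M (\<lambda>x. s k x - g x)" for k
    using Bochner_Integration.integrable_minus[OF L1_bound(1)[OF fin r d[of k]]] by simp
  have b: "(\<integral>x. norm (s k x - g x) \<partial>M) \<le> Lp_norm r M (\<lambda>x. g x - s k x) * C" for k
  proof -
    have "(\<integral>x. norm (s k x - g x) \<partial>M) = (\<integral>x. \<bar>g x - s k x\<bar> \<partial>M)"
      by (intro Bochner_Integration.integral_cong) auto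
    then show ?thesis using L1_bound(2)[OF fin r d[of k]] by (simp only: C_def)
  qed
  have "(\<lambda>k. Lp_norm r M (\<lambda>x. g x - s k x) * C) \<longlonglongrightarrow> 0 * C"
    using conv unfolding Lp_conv_def by (intro tendsto_intros)
  have "(\<lambda>k. (\<integral>x. norm (s k x - g x) \<partial>M)) \<longlonglongrightarrow> 0"
  proof (rule tendsto_sandwich[where f="\<lambda>_. 0" and h="\<lambda>k. Lp_norm r M (\<lambda>x. g x - s k x) * C"])
    show "\<forall>\<^sub>F n in sequentially. 0 \<le> (\<integral>x. norm (s n x - g x) \<partial>M)"
      by (intro always_eventually allI Bochner_Integration.integral_nonneg) simp
    show "\<forall>\<^sub>F n in sequentially. (\<integral>x. norm (s n x - g x) \<partial>M) \<le> Lp_norm r M (\<lambda>x. g x - s n x) * C"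
      using b by (intro always_eventually allI) 
  qed (use \<open>(\<lambda>k. Lp_norm r M (\<lambda>x. g x - s k x) * C) \<longlonglongrightarrow> 0 * C\<close> in simp_all)
  from tendsto_L1_AE_subseq[OF iu this] obtain \<rho> where
    "strict_mono \<rho>" "AE x in M. (\<lambda>j. s (\<rho> j) x - g x) \<longlonglongrightarrow> 0" by auto
  moreover have "AE x in M. (\<lambda>j. s (\<rho> j) x) \<longlonglongrightarrow> g x"
    using calculation(2)
  proof eventually_elim
    case (elim x)
    then have "(\<lambda>j. (s (\<rho> j) x - g x) + g x) \<longlonglongrightarrow> 0 + g x" by (intro tendsto_intros)
    then show ?case by simp
  qed
  ultimately show ?thesis by blast
qed

lemma biorth:
  assumes b: "schauder_basis_Lp r M e"
  shows "pair M (e m) (e n) = (if n = m then 1 else 0)"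
proof -
  have mem: "memLp r M (e m)" using b unfolding schauder_basis_Lp_def by auto
  have uniq: "\<And>u c. memLp r M u \<Longrightarrow> Lp_conv r M (\<lambda>k x. \<Sum>n\<le>k. c n * e n x) u \<Longrightarrow> (\<forall>n. c n = pair M u (e n))"
    using b unfolding schauder_basis_Lp_def by blast
  define c where "c = (\<lambda>n. if n = m then 1 else (0::real))"
  have "Lp_conv r M (\<lambda>k x. \<Sum>n\<le>k. c n * e n x) (e m)"
    unfolding Lp_conv_def
  proof (rule tendsto_eventually)
    show "\<forall>\<^sub>F k in sequentially. Lp_norm r M (\<lambda>x. e m x - (\<Sum>n\<le>k. c n * e n x)) = 0"
      using eventually_ge_at_top[of m]
    proof eventually_elim
      case (elim k)
      have "(\<Sum>n\<le>k. c n * e n x) = e m x" for x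
      proof -
        have "(\<Sum>n\<le>k. c n * e n x) = (\<Sum>n\<in>{..k}. if n = m then e n x else 0)"
          by (rule sum.cong) (auto simp: c_def)
        also have "\<dots> = e m x" using elim by (simp add: sum.delta)
        finally show ?thesis .
      qed
      then have "(\<lambda>x. e m x - (\<Sum>n\<le>k. c n * e n x)) = (\<lambda>x. 0)" by simp
      then show ?case by (simp add: Lp_norm_zero_fun)
    qed
  qed
  then show ?thesis using uniq[OF mem] by (auto simp: c_def)
qed

lemma A_lin:
  assumes A: "bounded_linear_Lp p M A" and u: "memLp p M u" and v: "memLp p M v"
  shows "AE x in M. A (\<lambda>y. a * u y + b * v y) x = a * A u x + b * A v x"
  using A u v unfolding bounded_linear_Lp_def by blast

lemma A_sum:
  fixes e :: "nat \<Rightarrow> 'a \<Rightarrow> real" and k :: nat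
  assumes A: "bounded_linear_Lp p M A" and p: "1 \<le> p" and e: "\<And>n. memLp p M (e n)"
  shows "AE x in M. A (\<lambda>y. \<Sum>n\<le>k. c n * e n y) x = (\<Sum>n\<le>k. c n * A (e n) x)"
proof (induction k)
  case 0
  have "(\<lambda>y. \<Sum>n\<le>0. c n * e n y) = (\<lambda>y. c 0 * e 0 y + 0 * e 0 y)" by simp
  then show ?case using A_lin[OF A e e, of "c 0" 0 0 0] by simp
next
  case (Suc k)
  have ms: "memLp p M (\<lambda>y. \<Sum>n\<le>k. c n * e n y)"
    using memLp_sum(1)[where r=p and I="{..k}" and u="\<lambda>n y. c n * e n y"] memLp_cmult(1)[OF e] p by auto
  have eq: "(\<lambda>y. \<Sum>n\<le>Suc k. c n * e n y) = (\<lambda>y. 1 * (\<Sum>n\<le>k. c n * e n y) + c (Suc k) * e (Suc k) y)"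
    by simp
  show ?case unfolding eq using A_lin[OF A ms e, of 1 "c (Suc k)" "Suc k"] Suc by eventually_elim simp
qed

lemma A_bound:
  assumes A: "bounded_linear_Lp p M A"
  obtains C where "C \<ge> 0" "\<And>u. memLp p M u \<Longrightarrow> Lp_norm p M (A u) \<le> C * Lp_norm p M u"
proof -
  obtain C where C: "\<And>u. memLp p M u \<Longrightarrow> Lp_norm p M (A u) \<le> C * Lp_norm p M u"
    using A unfolding bounded_linear_Lp_def by blast
  show ?thesis
  proof (rule that[of "max C 0"])
    fix u assume "memLp p M u"
    then show "Lp_norm p M (A u) \<le> max C 0 * Lp_norm p M u"
      using C[of u] Lp_norm_nonneg[of p M u] by (smt (verit) mult_right_mono)
  qed simp
qed

lemma A_mem:
  assumes A: "bounded_linear_Lp p M A" and "memLp p M u"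
  shows "memLp p M (A u)"
  using assms unfolding bounded_linear_Lp_def by blast

lemma coeff:
  assumes p: "1 < p" and bp: "schauder_basis_Lp p M e" and bp': "schauder_basis_Lp (p / (p - 1)) M e"
    and A: "bounded_linear_Lp p M A" and psi: "memLp p M \<psi>"
  shows "pair M (A \<psi>) (e m) = (\<Sum>n. pair M \<psi> (e n) * pair M (e m) (A (e n)))"
proof -
  have ep: "\<And>n. memLp p M (e n)" using bp unfolding schauder_basis_Lp_def by auto
  have ep': "\<And>n. memLp (p / (p - 1)) M (e n)" using bp' unfolding schauder_basis_Lp_def by auto
  have conv: "Lp_conv p M (\<lambda>k x. \<Sum>n\<le>k. pair M \<psi> (e n) * e n x) \<psi>"
    using bp psi unfolding schauder_basis_Lp_def by auto
  define c where "c n = pair M \<psi> (e n)" for n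
  define S where "S k = (\<lambda>y. \<Sum>n\<le>k. c n * e n y)" for k
  have mS: "memLp p M (S k)" for k
    unfolding S_def using memLp_sum(1)[where r=p and I="{..k}" and u="\<lambda>n y. c n * e n y"] memLp_cmult(1)[OF ep] p by auto
  have mD: "memLp p M (\<lambda>y. \<psi> y - S k y)" for k using minkowski_diff(1)[OF _ psi mS] p by auto
  obtain C where C0: "C \<ge> 0" and C: "\<And>u. memLp p M u \<Longrightarrow> Lp_norm p M (A u) \<le> C * Lp_norm p M u"
    using A_bound[OF A] by blast
  have mA: "memLp p M (A u)" if "memLp p M u" for u using A_mem[OF A that] .
  have measA: "A u \<in> borel_measurable M" if "memLp p M u" for u using mA[OF that] by (simp add: memLp_def)
  have meas_e[measurable]: "e n \<in> borel_measurable M" for n using ep[of n] by (simp add: memLp_def)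
  have measA_e[measurable]: "A (e n) \<in> borel_measurable M" for n using measA[OF ep] .
  have measApsi[measurable]: "A \<psi> \<in> borel_measurable M" using measA[OF psi] .
  have AS: "AE x in M. A (S k) x = (\<Sum>n\<le>k. c n * A (e n) x)" for k
    unfolding S_def by (rule A_sum[OF A]) (use p ep in auto)
  have AE_D: "AE x in M. A (\<lambda>y. \<psi> y - S k y) x = A \<psi> x - (\<Sum>n\<le>k. c n * A (e n) x)" for k
  proof -
    have eq: "(\<lambda>y. \<psi> y - S k y) = (\<lambda>y. 1 * \<psi> y + (-1) * S k y)" by simp
    show ?thesis unfolding eq using A_lin[OF A psi mS[of k], of 1 "-1"] AS[of k]
      by eventually_elim linarith
  qed
  have int_e: "integrable M (\<lambda>x. A u x * e m x)" if "memLp p M u" for u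
    using holder(1)[OF p mA[OF that] ep'[of m]] .
  have diff_eq: "pair M (A \<psi>) (e m) - (\<Sum>n\<le>k. c n * pair M (e m) (A (e n)))
      = (\<integral>x. A (\<lambda>y. \<psi> y - S k y) x * e m x \<partial>M)" for k
  proof -
    have "(\<integral>x. A (\<lambda>y. \<psi> y - S k y) x * e m x \<partial>M) = (\<integral>x. (A \<psi> x - (\<Sum>n\<le>k. c n * A (e n) x)) * e m x \<partial>M)"
      using AE_D[of k] measA[OF mD[of k]]
      by (intro integral_cong_AE) auto
    also have "\<dots> = (\<integral>x. A \<psi> x * e m x - (\<Sum>n\<le>k. c n * (A (e n) x * e m x)) \<partial>M)"
      by (simp add: left_diff_distrib sum_distrib_right mult.assoc)
    also have "\<dots> = (\<integral>x. A \<psi> x * e m x \<partial>M) - (\<Sum>n\<le>k. c n * (\<integral>x. A (e n) x * e m x \<partial>M))"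
      using int_e[OF psi] int_e[OF ep] by simp
    also have "\<dots> = pair M (A \<psi>) (e m) - (\<Sum>n\<le>k. c n * pair M (e m) (A (e n)))"
      by (simp add: pair_def mult.commute)
    finally show ?thesis by simp
  qed
  have bnd: "\<bar>pair M (A \<psi>) (e m) - (\<Sum>n\<le>k. c n * pair M (e m) (A (e n)))\<bar>
      \<le> C * Lp_norm p M (\<lambda>y. \<psi> y - S k y) * Lp_norm (p / (p - 1)) M (e m)" for k
  proof -
    have "\<bar>pair M (A \<psi>) (e m) - (\<Sum>n\<le>k. c n * pair M (e m) (A (e n)))\<bar>
        \<le> Lp_norm p M (A (\<lambda>y. \<psi> y - S k y)) * Lp_norm (p / (p - 1)) M (e m)"
      unfolding diff_eq using holder(2)[OF p mA[OF mD[of k]] ep'[of m]] .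
    also have "\<dots> \<le> C * Lp_norm p M (\<lambda>y. \<psi> y - S k y) * Lp_norm (p / (p - 1)) M (e m)"
      using C[OF mD[of k]] by (intro mult_right_mono) (auto simp: Lp_norm_nonneg)
    finally show ?thesis .
  qed
  have t0: "(\<lambda>k. C * Lp_norm p M (\<lambda>y. \<psi> y - S k y) * Lp_norm (p / (p - 1)) M (e m)) \<longlonglongrightarrow> C * 0 * Lp_norm (p / (p - 1)) M (e m)"
    using conv unfolding Lp_conv_def S_def c_def by (intro tendsto_intros)
  have "(\<lambda>k. pair M (A \<psi>) (e m) - (\<Sum>n\<le>k. c n * pair M (e m) (A (e n)))) \<longlonglongrightarrow> 0"
  proof (rule tendsto_sandwich[where f="\<lambda>k. - (C * Lp_norm p M (\<lambda>y. \<psi> y - S k y) * Lp_norm (p / (p - 1)) M (e m))"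
        and h="\<lambda>k. C * Lp_norm p M (\<lambda>y. \<psi> y - S k y) * Lp_norm (p / (p - 1)) M (e m)"])
    show "\<forall>\<^sub>F k in sequentially. - (C * Lp_norm p M (\<lambda>y. \<psi> y - S k y) * Lp_norm (p / (p - 1)) M (e m))
        \<le> pair M (A \<psi>) (e m) - (\<Sum>n\<le>k. c n * pair M (e m) (A (e n)))"
      using bnd by (intro always_eventually allI) (smt (verit) abs_le_iff)
    show "\<forall>\<^sub>F k in sequentially. pair M (A \<psi>) (e m) - (\<Sum>n\<le>k. c n * pair M (e m) (A (e n)))
        \<le> C * Lp_norm p M (\<lambda>y. \<psi> y - S k y) * Lp_norm (p / (p - 1)) M (e m)"
      using bnd by (intro always_eventually allI) (smt (verit) abs_le_iff)
    show "(\<lambda>k. - (C * Lp_norm p M (\<lambda>y. \<psi> y - S k y) * Lp_norm (p / (p - 1)) M (e m))) \<longlonglongrightarrow> 0"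
      using tendsto_minus[OF t0] by simp
    show "(\<lambda>k. C * Lp_norm p M (\<lambda>y. \<psi> y - S k y) * Lp_norm (p / (p - 1)) M (e m)) \<longlonglongrightarrow> 0"
      using t0 by simp
  qed
  then have "(\<lambda>k. pair M (A \<psi>) (e m) - (pair M (A \<psi>) (e m) - (\<Sum>n\<le>k. c n * pair M (e m) (A (e n))))) \<longlonglongrightarrow> pair M (A \<psi>) (e m) - 0"
    by (intro tendsto_intros)
  then have "(\<lambda>k. \<Sum>n\<le>k. c n * pair M (e m) (A (e n))) \<longlonglongrightarrow> pair M (A \<psi>) (e m)" by simp
  then have "(\<lambda>n. c n * pair M (e m) (A (e n))) sums pair M (A \<psi>) (e m)"
    unfolding sums_def by (simp add: LIMSEQ_lessThan_iff_atMost)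
  then show ?thesis by (simp add: sums_unique c_def)
qed

lemma phi_eq:
  fixes C D J a1 a2 s t \<nu> q \<beta> :: real
  assumes "0 < C" "0 < D" "0 < J"
  shows "((C\<^sup>2 * J powr a1) powr s * (((C*D*2 powr \<beta>) * J powr a2) powr \<nu>) powr t) powr (1/q)
    = ((C\<^sup>2) powr s * (C*D*2 powr \<beta>) powr (\<nu> * t)) powr (1/q) * J powr ((a1 * s + a2*\<nu> * t)/q)"
proof -
  have p1: "C\<^sup>2 > 0" "C*D*2 powr \<beta> > 0" using assms by auto
  have "(C\<^sup>2 * J powr a1) powr s = (C\<^sup>2) powr s * J powr (a1 * s)"
    using assms p1 by (simp add: powr_mult powr_powr)
  moreover have "(((C*D*2 powr \<beta>) * J powr a2) powr \<nu>) powr t = (C*D*2 powr \<beta>) powr (\<nu> * t) * J powr (a2*\<nu> * t)"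
    using assms p1 by (simp add: powr_mult powr_powr mult.assoc)
  ultimately have "(C\<^sup>2 * J powr a1) powr s * (((C*D*2 powr \<beta>) * J powr a2) powr \<nu>) powr t
     = ((C\<^sup>2) powr s * (C*D*2 powr \<beta>) powr (\<nu> * t)) * J powr (a1 * s + a2*\<nu> * t)"
    by (simp add: powr_add mult_ac)
  then show ?thesis using assms p1
    by (simp add: powr_mult powr_powr add_divide_distrib powr_add mult_ac)
qed

locale Lqsetup =
  fixes M :: "'a measure" and e :: "nat \<Rightarrow> 'a \<Rightarrow> real" and c :: "nat \<Rightarrow> real"
    and \<nu> q C D lam \<beta> :: real and m0 :: nat
  assumes fin: "finite_measure M"
    and nu: "2 < \<nu>" and q: "2 \<le> q" and qnu: "q < \<nu>"
    and enu: "\<And>n. memLp \<nu> M (e n)"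
    and ie: "\<And>m n. integrable M (\<lambda>x. e m x * e n x)"
    and orth: "\<And>m n. pair M (e m) (e n) = (if m = n then 1 else 0)"
    and Cp: "0 < C" and Dp: "0 < D" and lam0: "0 \<le> lam" and beta0: "0 \<le> \<beta>"
    and cb: "\<And>m. m0 \<le> m \<Longrightarrow> \<bar>c m\<bar> \<le> C * real m powr (- lam)"
    and Db: "\<And>m. m0 \<le> m \<Longrightarrow> Lp_norm \<nu> M (e m) \<le> D * real m powr \<beta>"
    and key: "q * (\<nu> * (\<beta> + 1 - lam) + 2 * lam - 1) < \<nu> * (2 * \<beta> + 1)"
begin

definition T :: "nat \<Rightarrow> nat \<Rightarrow> 'a \<Rightarrow> real" where
  "T k n = (\<lambda>x. \<Sum>m\<in>{k<..n}. c m * e m x)"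

definition "sg = (\<nu> - q) / (\<nu> - 2)"
definition "tg = (q - 2) / (\<nu> - 2)"
definition "E = ((1 - 2*lam) * sg + (1 - lam + \<beta>) * \<nu> * tg) / q"
definition "K = ((C\<^sup>2) powr sg * (C*D*2 powr \<beta>) powr (\<nu> * tg)) powr (1/q)"

lemma E_neg: "E < 0"
proof -
  have "(1 - 2*lam) * (\<nu> - q) + (1 - lam + \<beta>) * \<nu> * (q - 2) = q * (\<nu> * (\<beta> + 1 - lam) + 2 * lam - 1) - \<nu> * (2 * \<beta> + 1)"
    by (simp add: algebra_simps)
  also have "\<dots> < 0" using key by simp
  finally have "((1 - 2*lam) * (\<nu> - q) + (1 - lam + \<beta>) * \<nu> * (q - 2)) / (\<nu> - 2) < 0"
    using nu by (simp add: divide_neg_pos)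
  moreover have "((1 - 2*lam) * (\<nu> - q) + (1 - lam + \<beta>) * \<nu> * (q - 2)) / (\<nu> - 2) = (1 - 2*lam) * sg + (1 - lam + \<beta>) * \<nu> * tg"
    unfolding sg_def tg_def by (simp add: add_divide_distrib)
  ultimately show ?thesis unfolding E_def using q by (simp add: divide_neg_pos)
qed

lemma K_pos: "K > 0" unfolding K_def using Cp Dp by simp

lemma mem_e_q: "memLp q M (e n)"
  using memLp_mono_exp[OF fin enu] q qnu by auto

lemma memT_nu: "memLp \<nu> M (T k n)"
  unfolding T_def using memLp_sum(1)[where r=\<nu> and I="{k<..n}" and u="\<lambda>m x. c m * e m x"] memLp_cmult(1)[OF enu] nu by auto

lemma memT_q: "memLp q M (T k n)"
  using memLp_mono_exp[OF fin memT_nu] q qnu by auto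

lemma block:
  assumes j: "m0 \<le> 2^j" "2^j \<le> k + 1" "n < 2^(j+1)"
  shows "Lp_norm q M (T k n) \<le> K * (2 powr E) ^ j"
proof -
  define J :: real where "J = 2^j"
  have Jp: "J > 0" and J1: "J \<ge> 1" by (auto simp: J_def)
  have mrange: "m0 \<le> m" "J \<le> real m" "real m \<le> 2 * J" if "m \<in> {k<..n}" for m
  proof -
    have h: "2^j \<le> m" "m \<le> 2 * 2^j" using that j by auto
    have "real (2^j) \<le> real m" "real m \<le> real (2 * 2^j)" using h by (simp_all only: of_nat_le_iff)
    then show "m0 \<le> m" "J \<le> real m" "real m \<le> 2 * J" using j h unfolding J_def by auto
  qed
  have card: "real (card {k<..n}) \<le> J"
  proof -
    have "card {k<..n} = n - k" by simp
    moreover have "n - k \<le> 2^j" using j by (simp add: algebra_simps)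
    ultimately show ?thesis unfolding J_def by (metis of_nat_le_iff of_nat_numeral of_nat_power)
  qed
  have cm: "\<bar>c m\<bar> \<le> C * J powr (- lam)" if "m \<in> {k<..n}" for m
  proof -
    have "real m powr (- lam) \<le> J powr (- lam)" using mrange[OF that] Jp lam0 by (intro powr_mono2') auto
    then show ?thesis using cb[OF mrange(1)[OF that]] Cp by (smt (verit) mult_left_mono)
  qed
  have em: "Lp_norm \<nu> M (e m) \<le> D * (2 * J) powr \<beta>" if "m \<in> {k<..n}" for m
  proof -
    have "real m powr \<beta> \<le> (2 * J) powr \<beta>" using mrange[OF that] beta0 by (intro powr_mono2) auto
    then show ?thesis using Db[OF mrange(1)[OF that]] Dp by (smt (verit) mult_left_mono)
  qed
  define X where "X = C\<^sup>2 * J powr (1 - 2*lam)"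
  define Z where "Z = (C*D*2 powr \<beta>) * J powr (1 - lam + \<beta>)"
  have Xp: "X > 0" and Zp: "Z > 0" using Cp Dp Jp by (auto simp: X_def Z_def)
  have I2: "(\<integral>x. \<bar>T k n x\<bar> powr 2 \<partial>M) \<le> X"
  proof -
    have "(\<integral>x. \<bar>T k n x\<bar> powr 2 \<partial>M) = (\<Sum>m\<in>{k<..n}. (c m)\<^sup>2)"
      unfolding T_def by (rule ortho_sum[OF _ ie orth]) simp
    also have "\<dots> \<le> (\<Sum>m\<in>{k<..n}. (C * J powr (- lam))\<^sup>2)"
      using cm by (intro sum_mono) (metis abs_ge_zero power2_abs power_mono)
    also have "\<dots> = real (card {k<..n}) * (C * J powr (- lam))\<^sup>2" by simp
    also have "\<dots> \<le> J * (C * J powr (- lam))\<^sup>2" using card by (intro mult_right_mono) auto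
    also have "\<dots> = X"
    proof -
      have "J * (J powr (- lam))\<^sup>2 = J powr (1 - 2*lam)"
        using Jp by (simp add: power2_eq_square powr_add[symmetric] powr_mult_base)
      then show ?thesis unfolding X_def by (simp add: power_mult_distrib mult_ac)
    qed
    finally show ?thesis .
  qed
  have Nnu: "Lp_norm \<nu> M (T k n) \<le> Z"
  proof -
    have "Lp_norm \<nu> M (T k n) \<le> (\<Sum>m\<in>{k<..n}. Lp_norm \<nu> M (\<lambda>x. c m * e m x))"
      unfolding T_def using memLp_sum(2)[where r=\<nu> and I="{k<..n}" and u="\<lambda>m x. c m * e m x"] memLp_cmult(1)[OF enu] nu by auto
    also have "\<dots> = (\<Sum>m\<in>{k<..n}. \<bar>c m\<bar> * Lp_norm \<nu> M (e m))"
      using memLp_cmult(2)[OF enu] nu by simp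
    also have "\<dots> \<le> (\<Sum>m\<in>{k<..n}. (C * J powr (- lam)) * (D * (2 * J) powr \<beta>))"
      using cm em Cp by (intro sum_mono mult_mono) (auto simp: Lp_norm_nonneg)
    also have "\<dots> = real (card {k<..n}) * ((C * J powr (- lam)) * (D * (2 * J) powr \<beta>))" by simp
    also have "\<dots> \<le> J * ((C * J powr (- lam)) * (D * (2 * J) powr \<beta>))"
      using card Cp Dp by (intro mult_right_mono) auto
    also have "\<dots> = Z"
    proof -
      have "J * (J powr (- lam) * J powr \<beta>) = J powr (1 - lam + \<beta>)"
        using Jp by (simp add: powr_add[symmetric] powr_mult_base algebra_simps)
      then show ?thesis unfolding Z_def using Jp by (simp add: powr_mult mult_ac)
    qed
    finally show ?thesis .
  qed
  have Inu: "(\<integral>x. \<bar>T k n x\<bar> powr \<nu> \<partial>M) \<le> Z powr \<nu>"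
  proof -
    have "(\<integral>x. \<bar>T k n x\<bar> powr \<nu> \<partial>M) = Lp_norm \<nu> M (T k n) powr \<nu>"
      using Lp_norm_pow[OF memT_nu] nu by simp
    also have "\<dots> \<le> Z powr \<nu>" using Nnu nu by (intro powr_mono2) (auto simp: Lp_norm_nonneg)
    finally show ?thesis .
  qed
  have Iq: "(\<integral>x. \<bar>T k n x\<bar> powr q \<partial>M) \<le> X powr sg * (Z powr \<nu>) powr tg"
    using interp(2)[OF fin nu q qnu memT_nu I2 Inu Xp] Zp unfolding sg_def tg_def by simp
  have "Lp_norm q M (T k n) \<le> (X powr sg * (Z powr \<nu>) powr tg) powr (1/q)"
    unfolding Lp_norm_def using Iq q by (intro powr_mono2) (auto simp: integral_nonneg)
  also have "\<dots> = K * J powr E"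
    unfolding X_def Z_def K_def E_def using phi_eq[OF Cp Dp Jp] by simp
  also have "J powr E = (2 powr E) ^ j"
    unfolding J_def by (simp add: powr_realpow[symmetric] powr_powr mult.commute)
  finally show ?thesis .
qed

lemma r_bounds: "0 < 2 powr E" "2 powr E < 1"
proof -
  show "0 < 2 powr E" by simp
  have "2 powr E < 2 powr 0" using E_neg by (intro powr_less_mono) auto
  then show "2 powr E < 1" by simp
qed

definition "gb j = K * (2 powr E) ^ j / (1 - 2 powr E)"

lemma gb_step: "gb j = K * (2 powr E) ^ j + gb (Suc j)"
proof -
  have ne: "1 - 2 powr E \<noteq> 0" using r_bounds by linarith
  have "\<And>x r. 1 - r \<noteq> 0 \<Longrightarrow> K * x / (1 - r) = K * x + K * (r * x) / (1 - r)"
    by (simp add: field_simps)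
  from this[OF ne] show ?thesis unfolding gb_def power_Suc .
qed

lemma gb_ge: "K * (2 powr E) ^ j \<le> gb j"
  using gb_step[of j] r_bounds K_pos unfolding gb_def
  by (smt (verit) divide_nonneg_pos mult_nonneg_nonneg zero_le_power)

lemma gb_mono: "J \<le> j \<Longrightarrow> gb j \<le> gb J"
  unfolding gb_def using r_bounds K_pos
  by (intro divide_right_mono mult_left_mono power_decreasing) auto

lemma T_split:
  assumes "k \<le> l" "l \<le> n"
  shows "T k n = (\<lambda>x. T k l x + T l n x)"
proof -
  have "{k<..n} = {k<..l} \<union> {l<..n}" using assms by auto
  moreover have "{k<..l} \<inter> {l<..n} = {}" by auto
  ultimately show ?thesis unfolding T_def by (auto simp: sum.union_disjoint)
qed

lemma T_empty: "n \<le> k \<Longrightarrow> T k n = (\<lambda>x. 0)"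
  unfolding T_def by auto

lemma tail:
  assumes "m0 \<le> j" "2^j \<le> k + 1" "k + 1 < 2^(j+1)"
  shows "Lp_norm q M (T k n) \<le> gb j"
  using assms
proof (induction "n - k" arbitrary: k j rule: less_induct)
  case less
  have mj: "m0 \<le> 2^j" using less.prems(1) less_exp[of j] by linarith
  show ?case
  proof (cases "n < 2^(j+1)")
    case True
    then show ?thesis using block[OF mj less.prems(2) True] gb_ge[of j] by linarith
  next
    case False
    define l :: nat where "l = 2^(j+1) - 1"
    have kl: "k < l" and ln: "l \<le> n" and l1: "l + 1 = 2^(j+1)"
      using less.prems False unfolding l_def by auto
    have "Lp_norm q M (T k n) = Lp_norm q M (\<lambda>x. T k l x + T l n x)"
      using T_split[of k l n] kl ln by simp
    also have "\<dots> \<le> Lp_norm q M (T k l) + Lp_norm q M (T l n)"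
      using minkowski(2)[OF _ memT_q memT_q] q by auto
    also have "\<dots> \<le> K * (2 powr E) ^ j + gb (Suc j)"
    proof (rule add_mono)
      show "Lp_norm q M (T k l) \<le> K * (2 powr E) ^ j"
        using block[OF mj less.prems(2)] l1 by simp
      have "n - l < n - k" using kl ln by simp
      moreover have "l + 1 < 2^(Suc j + 1)" using l1 by simp
      ultimately show "Lp_norm q M (T l n) \<le> gb (Suc j)"
        using less.hyps[of l "Suc j"] less.prems(1) l1 by simp
    qed
    also have "\<dots> = gb j" using gb_step[of j] by simp
    finally show ?thesis .
  qed
qed

lemma eps:
  assumes "\<epsilon> > 0"
  shows "\<exists>k0. \<forall>k\<ge>k0. \<forall>n. Lp_norm q M (T k n) \<le> \<epsilon>"
proof -
  have "(\<lambda>j. gb j) \<longlonglongrightarrow> K * 0 / (1 - 2 powr E)"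
    unfolding gb_def using r_bounds by (intro tendsto_intros LIMSEQ_power_zero) auto
  then have "eventually (\<lambda>j. gb j < \<epsilon>) sequentially"
    using assms by (intro order_tendstoD) auto
  then obtain J1 where J1: "\<And>j. j \<ge> J1 \<Longrightarrow> gb j < \<epsilon>" by (auto simp: eventually_sequentially)
  define J where "J = max J1 m0"
  show ?thesis
  proof (intro exI allI impI)
    fix k n :: nat assume k: "2^J \<le> k"
    obtain j where j: "2^j \<le> k + 1" "k + 1 < 2^(j+1)"
      using ex_power_ivl1[of 2 "k+1"] by auto
    have lt: "(2::nat)^J < 2^(j+1)" using k j by linarith
    have "J < j + 1"
    proof (rule ccontr)
      assume "\<not> J < j + 1"
      then have "j + 1 \<le> J" by simp
      then have "(2::nat)^(j+1) \<le> 2^J" by (rule power_increasing) simp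
      then show False using lt by simp
    qed
    then have jJ: "J \<le> j" by simp
    have "Lp_norm q M (T k n) \<le> gb j" using tail[OF _ j] jJ unfolding J_def by simp
    also have "\<dots> < \<epsilon>" using J1[of j] jJ unfolding J_def by simp
    finally show "Lp_norm q M (T k n) \<le> \<epsilon>" by simp
  qed
qed

lemma Lq_result:
  assumes p: "1 < p" and f: "memLp p M f" and ep: "\<And>n. memLp p M (e n)"
    and conv: "Lp_conv p M (\<lambda>k x. \<Sum>m\<le>k. c m * e m x) f"
  shows "memLp q M f \<and> Lp_conv q M (\<lambda>k x. \<Sum>m\<le>k. e m x * c m) f"
proof -
  define S where "S k = (\<lambda>x. \<Sum>m\<le>k. c m * e m x)" for k
  have mSp: "memLp p M (S k)" for k
    unfolding S_def using memLp_sum(1)[where r=p and I="{..k}" and u="\<lambda>m x. c m * e m x"] memLp_cmult(1)[OF ep] p by auto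
  have mSq: "memLp q M (S k)" for k
    unfolding S_def using memLp_sum(1)[where r=q and I="{..k}" and u="\<lambda>m x. c m * e m x"] memLp_cmult(1)[OF mem_e_q] q by auto
  have measS[measurable]: "S k \<in> borel_measurable M" for k using mSq[of k] by (simp add: memLp_def)
  have measf[measurable]: "f \<in> borel_measurable M" using f by (simp add: memLp_def)
  have measT[measurable]: "T k n \<in> borel_measurable M" for k n using memT_q[of k n] by (simp add: memLp_def)
  obtain \<rho> :: "nat \<Rightarrow> nat" where \<rho>: "strict_mono \<rho>" and ae: "AE x in M. (\<lambda>j. S (\<rho> j) x) \<longlonglongrightarrow> f x"
  proof -
    have "Lp_conv p M S f" using conv unfolding S_def by simp
    from Lp_AE_subseq[OF fin p mSp f this] show ?thesis using that by blast
  qed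
  have Sdiff: "S n x - S k x = T k n x" if "k \<le> n" for k n x
  proof -
    have "{..n} = {..k} \<union> {k<..n}" using that by auto
    moreover have "{..k} \<inter> {k<..n} = {}" by auto
    ultimately have "S n x = S k x + T k n x" unfolding S_def T_def by (simp add: sum.union_disjoint)
    then show ?thesis by simp
  qed
  have main: "\<exists>k0. \<forall>k\<ge>k0. memLp q M (\<lambda>x. f x - S k x) \<and> Lp_norm q M (\<lambda>x. f x - S k x) \<le> \<epsilon>"
    if ep0: "\<epsilon> > 0" for \<epsilon>
  proof -
    obtain k0 where k0: "\<And>k n. k \<ge> k0 \<Longrightarrow> Lp_norm q M (T k n) \<le> \<epsilon>" using eps[OF ep0] by blast
    show ?thesis
    proof (intro exI allI impI)
      fix k assume kk: "k0 \<le> k"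
      define h where "h j = T k (\<rho> (j + k))" for j
      have hconv: "AE x in M. (\<lambda>j. h j x) \<longlonglongrightarrow> f x - S k x"
        using ae
      proof eventually_elim
        case (elim x)
        have "(\<lambda>j. S (\<rho> (j + k)) x) \<longlonglongrightarrow> f x"
          using LIMSEQ_ignore_initial_segment[OF elim, of k] by simp
        then have "(\<lambda>j. S (\<rho> (j + k)) x - S k x) \<longlonglongrightarrow> f x - S k x" by (intro tendsto_intros)
        moreover have "S (\<rho> (j + k)) x - S k x = h j x" for j
        proof -
          have "j + k \<le> \<rho> (j + k)" using seq_suble[OF \<rho>] by simp
          then show ?thesis unfolding h_def by (intro Sdiff) simp
        qed
        ultimately show ?case by simp
      qed
      have hb: "(\<integral>x. \<bar>h j x\<bar> powr q \<partial>M) \<le> \<epsilon> powr q" for j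
      proof -
        have "(\<integral>x. \<bar>h j x\<bar> powr q \<partial>M) = Lp_norm q M (h j) powr q"
          unfolding h_def using Lp_norm_pow[OF memT_q] q by simp
        also have "\<dots> \<le> \<epsilon> powr q" unfolding h_def using k0[OF kk] q
          by (intro powr_mono2) (auto simp: Lp_norm_nonneg)
        finally show ?thesis .
      qed
      have hi: "integrable M (\<lambda>x. \<bar>h j x\<bar> powr q)" for j
        using memT_q unfolding h_def memLp_def by auto
      note F = fatou_Lq[of "\<lambda>x. f x - S k x" M h, OF _ _ hconv _ hi hb]
      have Fi: "integrable M (\<lambda>x. \<bar>f x - S k x\<bar> powr q)" and Fb: "(\<integral>x. \<bar>f x - S k x\<bar> powr q \<partial>M) \<le> \<epsilon> powr q"
        using F q unfolding h_def by auto
      show "memLp q M (\<lambda>x. f x - S k x) \<and> Lp_norm q M (\<lambda>x. f x - S k x) \<le> \<epsilon>"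
      proof
        show "memLp q M (\<lambda>x. f x - S k x)" using Fi unfolding memLp_def by auto
        have "Lp_norm q M (\<lambda>x. f x - S k x) \<le> (\<epsilon> powr q) powr (1/q)"
          unfolding Lp_norm_def using Fb q by (intro powr_mono2) (auto simp: integral_nonneg)
        also have "\<dots> = \<epsilon>" using ep0 q by (simp add: powr_powr)
        finally show "Lp_norm q M (\<lambda>x. f x - S k x) \<le> \<epsilon>" .
      qed
    qed
  qed
  have mf: "memLp q M f"
  proof -
    obtain k0 where "\<forall>k\<ge>k0. memLp q M (\<lambda>x. f x - S k x) \<and> Lp_norm q M (\<lambda>x. f x - S k x) \<le> 1"
      using main[of 1] by auto
    then have "memLp q M (\<lambda>x. f x - S k0 x)" by auto
    from minkowski(1)[OF _ this mSq[of k0]] q show ?thesis by simp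
  qed
  have eqS: "(\<lambda>x. f x - (\<Sum>m\<le>k. e m x * c m)) = (\<lambda>x. f x - S k x)" for k
    unfolding S_def by (simp add: mult.commute)
  have "(\<lambda>k. Lp_norm q M (\<lambda>x. f x - S k x)) \<longlonglongrightarrow> 0"
  proof (rule LIMSEQ_I)
    fix r :: real assume r: "0 < r"
    obtain k0 where k0: "\<forall>k\<ge>k0. memLp q M (\<lambda>x. f x - S k x) \<and> Lp_norm q M (\<lambda>x. f x - S k x) \<le> r/2"
      using main[of "r/2"] r by auto
    show "\<exists>no. \<forall>n\<ge>no. norm (Lp_norm q M (\<lambda>x. f x - S n x) - 0) < r"
      using k0 r by (intro exI[of _ k0]) (auto simp: Lp_norm_nonneg)
  qed
  then show ?thesis using mf unfolding Lp_conv_def eqS by simp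
qed

end

theorem theorem1:
  fixes M :: "'a measure" and e :: "nat \<Rightarrow> 'a \<Rightarrow> real" and Mn :: "nat \<Rightarrow> real"
    and p \<nu> \<beta> lam :: real and A :: "('a \<Rightarrow> real) \<Rightarrow> ('a \<Rightarrow> real)" and \<psi> :: "'a \<Rightarrow> real"
  assumes fin: "finite_measure M"
    and p: "2 \<le> p"
    and basis_p: "schauder_basis_Lp p M e"
    and basis_p': "schauder_basis_Lp (p / (p - 1)) M e"
    and nu: "\<nu> > 2"
    and e_nu: "\<And>n. memLp \<nu> M (e n)"
    and e_bound: "\<And>n. Lp_norm \<nu> M (e n) \<le> Mn n"
    and Mn_mono: "\<And>n. Mn n \<le> Mn (Suc n)"
    and A: "bounded_linear_Lp p M A"
    and beta: "0 \<le> \<beta>" and lam: "0 \<le> lam"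
    and psi: "memLp p M \<psi>"
    and summ: "\<And>m. summable (\<lambda>n. pair M \<psi> (e n) * pair M (e m) (A (e n)))"
    and asym_f: "asymp_equiv_seq
          (\<lambda>m. \<bar>\<Sum>n. pair M \<psi> (e n) * pair M (e m) (A (e n))\<bar>) (\<lambda>m. real m powr (- lam))"
    and asym_M: "asymp_equiv_seq Mn (\<lambda>m. real m powr \<beta>)"
  shows "(\<forall>m. pair M (A \<psi>) (e m) = (\<Sum>n. pair M \<psi> (e n) * pair M (e m) (A (e n))))
    \<and> (lam \<le> 1/2 \<longrightarrow>
         memLp p M (A \<psi>) \<and>
         Lp_conv p M (\<lambda>k x. \<Sum>m\<le>k. e m x * (\<Sum>n. pair M \<psi> (e n) * pair M (e m) (A (e n)))) (A \<psi>))
    \<and> (1/2 < lam \<and> lam < (\<nu> * (\<beta> + 1) - 1) / (\<nu> - 2) \<longrightarrow>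
         (\<forall>q. 2 \<le> q \<and> q < \<nu> \<and> q < \<nu> * (2 * \<beta> + 1) / (\<nu> * (\<beta> + 1 - lam) + 2 * lam - 1) \<longrightarrow>
           memLp q M (A \<psi>) \<and>
           Lp_conv q M (\<lambda>k x. \<Sum>m\<le>k. e m x * (\<Sum>n. pair M \<psi> (e n) * pair M (e m) (A (e n)))) (A \<psi>)))
    \<and> ((\<nu> * (\<beta> + 1) - 1) / (\<nu> - 2) \<le> lam \<longrightarrow>
         (\<forall>q. 2 \<le> q \<and> q < \<nu> \<longrightarrow>
           memLp q M (A \<psi>) \<and>
           Lp_conv q M (\<lambda>k x. \<Sum>m\<le>k. e m x * (\<Sum>n. pair M \<psi> (e n) * pair M (e m) (A (e n)))) (A \<psi>)))"
proof -
  have p1: "1 < p" using p by simp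
  have ep: "\<And>n. memLp p M (e n)" using basis_p unfolding schauder_basis_Lp_def by auto
  have ep': "\<And>n. memLp (p / (p - 1)) M (e n)" using basis_p' unfolding schauder_basis_Lp_def by auto
  have C1: "\<forall>m. pair M (A \<psi>) (e m) = (\<Sum>n. pair M \<psi> (e n) * pair M (e m) (A (e n)))"
    using coeff[OF p1 basis_p basis_p' A psi] by blast
  define c where "c m = pair M (A \<psi>) (e m)" for m
  have cS: "(\<Sum>n. pair M \<psi> (e n) * pair M (e m) (A (e n))) = c m" for m using C1 unfolding c_def by simp
  have mf: "memLp p M (A \<psi>)" using A_mem[OF A psi] .
  have convp: "Lp_conv p M (\<lambda>k x. \<Sum>m\<le>k. c m * e m x) (A \<psi>)"
    using basis_p mf unfolding schauder_basis_Lp_def c_def by auto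
  have eqsum: "(\<lambda>k x. \<Sum>m\<le>k. e m x * (\<Sum>n. pair M \<psi> (e n) * pair M (e m) (A (e n))))
      = (\<lambda>k x. \<Sum>m\<le>k. e m x * c m)" unfolding cS ..
  have part1: "memLp p M (A \<psi>) \<and> Lp_conv p M (\<lambda>k x. \<Sum>m\<le>k. e m x * (\<Sum>n. pair M \<psi> (e n) * pair M (e m) (A (e n)))) (A \<psi>)"
    using mf convp unfolding eqsum by (simp add: mult.commute)
  obtain c0 C where c0: "0 < c0" "c0 \<le> C" and evC0: "\<forall>\<^sub>F m in sequentially. c0 * real m powr (- lam) \<le> \<bar>c m\<bar> \<and> \<bar>c m\<bar> \<le> C * real m powr (- lam)"
    using asym_f unfolding asymp_equiv_seq_def cS by blast
  have evC: "\<forall>\<^sub>F m in sequentially. \<bar>c m\<bar> \<le> C * real m powr (- lam)"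
    using evC0 by (rule eventually_mono) simp
  obtain d0 D where d0: "0 < d0" "d0 \<le> D" and evD0: "\<forall>\<^sub>F m in sequentially. d0 * real m powr \<beta> \<le> Mn m \<and> Mn m \<le> D * real m powr \<beta>"
    using asym_M unfolding asymp_equiv_seq_def by blast
  have evD: "\<forall>\<^sub>F m in sequentially. Mn m \<le> D * real m powr \<beta>"
    using evD0 by (rule eventually_mono) simp
  obtain N1 where N1: "\<And>m. N1 \<le> m \<Longrightarrow> \<bar>c m\<bar> \<le> C * real m powr (- lam)"
    using evC unfolding eventually_sequentially by blast
  obtain N2 where N2: "\<And>m. N2 \<le> m \<Longrightarrow> Mn m \<le> D * real m powr \<beta>"
    using evD unfolding eventually_sequentially by blast
  define m0 where "m0 = max N1 N2"
  have gen: "memLp q M (A \<psi>) \<and> Lp_conv q M (\<lambda>k x. \<Sum>m\<le>k. e m x * (\<Sum>n. pair M \<psi> (e n) * pair M (e m) (A (e n)))) (A \<psi>)"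
    if q: "2 \<le> q" "q < \<nu>" and key: "q * (\<nu> * (\<beta> + 1 - lam) + 2 * lam - 1) < \<nu> * (2 * \<beta> + 1)" for q
  proof -
    interpret L: Lqsetup M e c \<nu> q C D lam \<beta> m0
    proof (rule Lqsetup.intro)
      show "finite_measure M" by (rule fin)
      show "2 < \<nu>" "2 \<le> q" "q < \<nu>" using nu q by auto
      show "\<And>n. memLp \<nu> M (e n)" by (rule e_nu)
      show "\<And>m n. integrable M (\<lambda>x. e m x * e n x)" using holder(1)[OF p1 ep ep'] .
      show "\<And>m n. pair M (e m) (e n) = (if m = n then 1 else 0)" using biorth[OF basis_p] by auto
      show "0 < C" "0 < D" "0 \<le> lam" "0 \<le> \<beta>" using c0 d0 lam beta by auto
      show "\<And>m. m0 \<le> m \<Longrightarrow> \<bar>c m\<bar> \<le> C * real m powr (- lam)" using N1 unfolding m0_def by auto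
      show "\<And>m. m0 \<le> m \<Longrightarrow> Lp_norm \<nu> M (e m) \<le> D * real m powr \<beta>"
        using N2 e_bound unfolding m0_def by (meson max.boundedE order_trans)
      show "q * (\<nu> * (\<beta> + 1 - lam) + 2 * lam - 1) < \<nu> * (2 * \<beta> + 1)" by (rule key)
    qed
    show ?thesis using L.Lq_result[OF p1 mf ep convp] unfolding eqsum .
  qed
  have part2: "1/2 < lam \<and> lam < (\<nu> * (\<beta> + 1) - 1) / (\<nu> - 2) \<longrightarrow>
         (\<forall>q. 2 \<le> q \<and> q < \<nu> \<and> q < \<nu> * (2 * \<beta> + 1) / (\<nu> * (\<beta> + 1 - lam) + 2 * lam - 1) \<longrightarrow>
           memLp q M (A \<psi>) \<and>
           Lp_conv q M (\<lambda>k x. \<Sum>m\<le>k. e m x * (\<Sum>n. pair M \<psi> (e n) * pair M (e m) (A (e n)))) (A \<psi>))"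
  proof (intro impI allI)
    fix q assume h: "1/2 < lam \<and> lam < (\<nu> * (\<beta> + 1) - 1) / (\<nu> - 2)"
      and hq: "2 \<le> q \<and> q < \<nu> \<and> q < \<nu> * (2 * \<beta> + 1) / (\<nu> * (\<beta> + 1 - lam) + 2 * lam - 1)"
    have "lam * (\<nu> - 2) < \<nu> * (\<beta> + 1) - 1" using h nu by (simp add: pos_less_divide_eq)
    then have Dp: "0 < \<nu> * (\<beta> + 1 - lam) + 2 * lam - 1" by (simp add: algebra_simps)
    have "q * (\<nu> * (\<beta> + 1 - lam) + 2 * lam - 1) < \<nu> * (2 * \<beta> + 1)"
      using hq Dp by (simp add: pos_less_divide_eq)
    then show "memLp q M (A \<psi>) \<and>
           Lp_conv q M (\<lambda>k x. \<Sum>m\<le>k. e m x * (\<Sum>n. pair M \<psi> (e n) * pair M (e m) (A (e n)))) (A \<psi>)"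
      using gen hq by auto
  qed
  have part3: "(\<nu> * (\<beta> + 1) - 1) / (\<nu> - 2) \<le> lam \<longrightarrow>
         (\<forall>q. 2 \<le> q \<and> q < \<nu> \<longrightarrow>
           memLp q M (A \<psi>) \<and>
           Lp_conv q M (\<lambda>k x. \<Sum>m\<le>k. e m x * (\<Sum>n. pair M \<psi> (e n) * pair M (e m) (A (e n)))) (A \<psi>))"
  proof (intro impI allI)
    fix q assume h: "(\<nu> * (\<beta> + 1) - 1) / (\<nu> - 2) \<le> lam" and hq: "2 \<le> q \<and> q < \<nu>"
    have "\<nu> * (\<beta> + 1) - 1 \<le> lam * (\<nu> - 2)" using h nu by (simp add: pos_divide_le_eq)
    then have Dn: "\<nu> * (\<beta> + 1 - lam) + 2 * lam - 1 \<le> 0" by (simp add: algebra_simps)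
    have "q * (\<nu> * (\<beta> + 1 - lam) + 2 * lam - 1) \<le> 0" using Dn hq by (simp add: mult_nonneg_nonpos)
    also have "0 < \<nu> * (2 * \<beta> + 1)" using nu beta by simp
    finally show "memLp q M (A \<psi>) \<and>
           Lp_conv q M (\<lambda>k x. \<Sum>m\<le>k. e m x * (\<Sum>n. pair M \<psi> (e n) * pair M (e m) (A (e n)))) (A \<psi>)"
      using gen hq by auto
  qed
  show ?thesis using C1 part1 part2 part3 by blast
qed

end
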